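(* Let $k\ge 1$. For every $\epsilon>0$ there is $\eta>0$ such that for all sufficiently large $n$ the following holds. If $H$ is a $2k$-uniform hypergraph on $n$ vertices containing no copy of ${\cal C}^{(2k)}_3$ with $e(H)>\frac12\binom{n}{2k}-\eta n^{2k}$, then there is a partition $V(H)=V_1\cup V_2$ such that all but at most $\epsilon n^{2k}$ of the $2k$-element subsets of $V(H)$ are correct with respect to this partition.
   Context: ${\cal C}^{(2k)}_3$ is the $2k$-uniform hypergraph obtained by taking pairwise disjoint sets $P_1,P_2,P_3$ each of size $k$ with edges $P_1\cup P_2$, $P_2\cup P_3$, $P_3\cup P_1$. Given a partition $V(H)=V_1\cup V_2$, a $2k$-set is good if it intersects each $V_i$ in an odd number of elements, and bad otherwise; it is correct (with respect to $H$) if it is either a good edge of $H$ or a bad non-edge of $H$, and incorrect otherwise. *)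

theory Defs
  imports Complex_Main
begin

definition uniform_hypergraph :: "nat \<Rightarrow> 'a set \<Rightarrow> 'a set set \<Rightarrow> bool" where
  "uniform_hypergraph r V E \<longleftrightarrow> finite V \<and> (\<forall>S\<in>E. S \<subseteq> V \<and> card S = r)"

definition contains_C3 :: "nat \<Rightarrow> 'a set \<Rightarrow> 'a set set \<Rightarrow> bool" where
  "contains_C3 k V E \<longleftrightarrow> (\<exists>P1 P2 P3. P1 \<subseteq> V \<and> P2 \<subseteq> V \<and> P3 \<subseteq> V \<and>
     card P1 = k \<and> card P2 = k \<and> card P3 = k \<and>
     P1 \<inter> P2 = {} \<and> P2 \<inter> P3 = {} \<and> P3 \<inter> P1 = {} \<and>
     P1 \<union> P2 \<in> E \<and> P2 \<union> P3 \<in> E \<and> P3 \<union> P1 \<in> E)"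

definition good_set :: "'a set \<Rightarrow> 'a set \<Rightarrow> 'a set \<Rightarrow> bool" where
  "good_set V1 V2 S \<longleftrightarrow> odd (card (S \<inter> V1)) \<and> odd (card (S \<inter> V2))"

definition correct_set :: "'a set set \<Rightarrow> 'a set \<Rightarrow> 'a set \<Rightarrow> 'a set \<Rightarrow> bool" where
  "correct_set E V1 V2 S \<longleftrightarrow> (S \<in> E \<and> good_set V1 V2 S) \<or> (S \<notin> E \<and> \<not> good_set V1 V2 S)"

end

theory Submission
  imports Defs "HOL-Analysis.Convex"
begin

lemma exists_ge_avg:
  fixes f :: "'a \<Rightarrow> nat"
  assumes "finite A" "A \<noteq> {}"
  shows "\<exists>a\<in>A. sum f A \<le> card A * f a"
proof (rule ccontr)
  assume "\<not> ?thesis"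
  hence "\<forall>a\<in>A. card A * f a < sum f A" by (auto simp: not_le)
  hence "(\<Sum>a\<in>A. card A * f a) < (\<Sum>a\<in>A. sum f A)"
    using assms by (intro sum_strict_mono) auto
  thus False by (simp add: sum_distrib_left)
qed

lemma exists_le_avg:
  fixes f :: "'a \<Rightarrow> nat"
  assumes "finite A" "A \<noteq> {}"
  shows "\<exists>a\<in>A. card A * f a \<le> sum f A"
proof (rule ccontr)
  assume "\<not> ?thesis"
  hence "\<forall>a\<in>A. sum f A < card A * f a" by (auto simp: not_le)
  hence "(\<Sum>a\<in>A. sum f A) < (\<Sum>a\<in>A. card A * f a)"
    using assms by (intro sum_strict_mono) auto
  thus False by (simp add: sum_distrib_left)
qed

lemma furedi:
  fixes V :: "'a set" and R :: "'a \<Rightarrow> 'a \<Rightarrow> bool"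
  assumes fin: "finite V" and Rsub: "\<And>u v. R u v \<Longrightarrow> u \<in> V \<and> v \<in> V"
    and sym: "\<And>u v. R u v \<Longrightarrow> R v u"
    and tri: "\<And>a b c. R a b \<Longrightarrow> R b c \<Longrightarrow> R c a \<Longrightarrow> False"
  shows "\<exists>X\<subseteq>V. real (card {(u,v) \<in> V\<times>V. R u v \<noteq> ((u\<in>X) \<noteq> (v\<in>X))})
            \<le> 9 * (real (card V)^2/2 - real (card {(u,v). R u v}))"
proof -
  define Rs where "Rs = {(u,v). R u v}"
  define N where "N = card V"
  define d where "d u = card {v. R u v}" for u
  have RsS: "Rs = Sigma V (\<lambda>u. {v. R u v})" using Rsub by (auto simp: Rs_def)
  have finN: "finite {v. R u v}" for u using Rsub fin by (metis (mono_tags) mem_Collect_eq rev_finite_subset subsetI)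
  have finRs: "finite Rs" unfolding RsS using fin finN by auto
  have e2: "card Rs = (\<Sum>u\<in>V. d u)" unfolding RsS d_def using fin finN by (simp add: card_SigmaI)
  have RsVV: "Rs \<subseteq> V \<times> V" using Rsub by (auto simp: Rs_def)
  define M where "M X = {(u,v) \<in> V\<times>V. R u v \<noteq> ((u\<in>X) \<noteq> (v\<in>X))}" for X
  show ?thesis
  proof (cases "Rs = {}")
    case True
    have "M {} = {}" using True by (auto simp: M_def Rs_def)
    hence "real (card (M {})) \<le> 9 * (real (card V)^2/2 - real (card Rs))" using True by simp
    thus ?thesis unfolding M_def Rs_def by blast
  next
    case False
    have s1: "(\<Sum>(u,v)\<in>Rs. d u) = (\<Sum>u\<in>V. d u * d u)"
      unfolding RsS using fin finN by (simp add: sum.Sigma[symmetric] d_def)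
    have s2: "(\<Sum>(u,v)\<in>Rs. d v) = (\<Sum>(u,v)\<in>Rs. d u)"
    proof -
      have "bij_betw prod.swap Rs Rs" using sym by (auto simp: bij_betw_def Rs_def inj_on_def image_def)
      from sum.reindex_bij_betw[OF this, of "\<lambda>(u,v). d u"] show ?thesis by (simp add: case_prod_beta)
    qed
    obtain A B where AB: "(A,B) \<in> Rs" "(\<Sum>p\<in>Rs. (\<lambda>(u,v). d u + d v) p) \<le> card Rs * (d A + d B)"
      using exists_ge_avg[OF finRs False, of "\<lambda>(u,v). d u + d v"] by auto
    have sumdd: "(\<Sum>p\<in>Rs. (\<lambda>(u,v). d u + d v) p) = 2 * (\<Sum>u\<in>V. d u * d u)"
      using s1 s2 by (simp add: sum.distrib split_def)
    have CS: "(real (card Rs))^2 \<le> (\<Sum>u\<in>V. real (d u) * real (d u)) * real N"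
      using sum_squared_le_sum_of_squares[of "\<lambda>u. real (d u)" V] unfolding e2 N_def
      by (simp add: power2_eq_square)
    have pos: "real (card Rs) > 0" using False finRs by (simp add: card_gt_0_iff)
    have key: "2 * real (card Rs) \<le> real (d A + d B) * real N"
    proof -
      have n1: "2 * (\<Sum>u\<in>V. d u * d u) \<le> card Rs * (d A + d B)" using AB(2) sumdd by simp
      hence "real (2 * (\<Sum>u\<in>V. d u * d u)) \<le> real (card Rs * (d A + d B))" by (simp only: of_nat_le_iff)
      hence h2: "2 * (\<Sum>u\<in>V. real (d u) * real (d u)) \<le> real (card Rs) * real (d A + d B)" by simp
      hence "2 * (real (card Rs))^2 \<le> real (card Rs) * real (d A + d B) * real N"
        using CS mult_right_mono[OF h2, of "real N"] by (simp add: algebra_simps)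
      thus ?thesis using pos by (simp add: power2_eq_square mult.assoc)
    qed
    define X where "X = {v. R B v}"
    define NA where "NA = {v. R A v}"
    define Rest where "Rest = V - NA - X"
    have RAB: "R A B" using AB by (simp add: Rs_def)
    have XV: "X \<subseteq> V" "NA \<subseteq> V" using Rsub by (auto simp: X_def NA_def)
    have disj: "NA \<inter> X = {}" using tri[OF RAB] sym by (auto simp: X_def NA_def)
    have cX: "card X = d B" "card NA = d A" by (simp_all add: X_def NA_def d_def)
    have finNAX: "finite (NA \<union> X)" using XV fin by (meson finite_Un finite_subset)
    have cNAX: "card (NA \<union> X) = d A + d B" using disj cX fin XV by (simp add: card_Un_disjoint finite_subset)
    have cRest: "card Rest = N - d A - d B"
    proof -
      have "Rest = V - (NA \<union> X)" by (auto simp: Rest_def)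
      hence "card Rest = card V - card (NA \<union> X)" using finNAX XV by (simp add: card_Diff_subset)
      thus ?thesis using cNAX by (simp add: N_def)
    qed
    have dle: "d A + d B \<le> N"
    proof -
      have "card (NA \<union> X) = d A + d B" using disj cX fin XV by (simp add: card_Un_disjoint finite_subset)
      moreover have "card (NA \<union> X) \<le> N" unfolding N_def using XV fin by (intro card_mono) auto
      ultimately show ?thesis by simp
    qed
    define M1 where "M1 = {(u,v). R u v \<and> ((u\<in>X) = (v\<in>X))}"
    define Cr where "Cr = {(u,v) \<in> V\<times>V. (u\<in>X) \<noteq> (v\<in>X)}"
    define M2 where "M2 = Cr - Rs"
    have MX: "M X \<subseteq> M1 \<union> M2" by (auto simp: M_def M1_def M2_def Cr_def Rs_def)
    have M1sub: "M1 \<subseteq> Rest \<times> V \<union> V \<times> Rest"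
    proof
      fix p assume "p \<in> M1"
      then obtain u v where p: "p = (u,v)" "R u v" "(u\<in>X) = (v\<in>X)" by (auto simp: M1_def)
      have uv: "u \<in> V" "v \<in> V" using Rsub p by auto
      have "\<not> (u \<in> X \<and> v \<in> X)" using tri[of B u v] p(2) sym by (auto simp: X_def)
      moreover have "\<not> (u \<in> NA \<and> v \<in> NA)" using tri[of A u v] p(2) sym by (auto simp: NA_def)
      ultimately show "p \<in> Rest \<times> V \<union> V \<times> Rest" using p uv by (auto simp: Rest_def)
    qed
    have finRest: "finite Rest" using fin by (simp add: Rest_def)
    have cM1: "card M1 \<le> 2 * card Rest * N"
    proof -
      have "card M1 \<le> card (Rest \<times> V \<union> V \<times> Rest)" using M1sub fin finRest by (intro card_mono) auto
      also have "\<dots> \<le> card (Rest \<times> V) + card (V \<times> Rest)" by (rule card_Un_le)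
      finally show ?thesis by (simp add: card_cartesian_product N_def algebra_simps)
    qed
    have finCr: "finite Cr" using fin by (auto simp: Cr_def intro: finite_subset[of _ "V\<times>V"])
    have cCr: "real (card Cr) \<le> real N ^ 2 / 2"
    proof -
      have "Cr = X \<times> (V - X) \<union> (V - X) \<times> X" using XV by (auto simp: Cr_def)
      hence "card Cr \<le> card (X \<times> (V - X)) + card ((V - X) \<times> X)" using card_Un_le by metis
      also have "\<dots> = 2 * (card X * card (V - X))" by (simp add: card_cartesian_product)
      finally have "real (card Cr) \<le> 2 * (real (card X) * real (card (V - X)))" by (metis of_nat_le_iff of_nat_mult of_nat_numeral)
      moreover have "card (V - X) = N - card X" "card X \<le> N" using XV fin by (auto simp: N_def card_Diff_subset finite_subset card_mono)
      ultimately have "real (card Cr) \<le> 2 * (real (card X) * (real N - real (card X)))" by simp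
      also have "\<dots> \<le> real N ^ 2 / 2"
      proof -
        have h: "0 \<le> (real N - 2*real (card X)) * (real N - 2*real (card X))" by simp
        show ?thesis using h unfolding power2_eq_square by (simp add: algebra_simps)
      qed
      finally show ?thesis .
    qed
    have M1Rs: "M1 \<subseteq> Rs" by (auto simp: M1_def Rs_def)
    have finM1: "finite M1" using M1Rs finRs finite_subset by blast
    have finM2: "finite M2" using finCr by (simp add: M2_def)
    have cM2: "card M2 + card Rs \<le> card Cr + card M1"
    proof -
      have "Rs \<subseteq> (Cr \<inter> Rs) \<union> M1" using RsVV by (auto simp: Cr_def M1_def Rs_def)
      hence "card Rs \<le> card ((Cr \<inter> Rs) \<union> M1)" using finCr finM1 by (intro card_mono) auto
      also have "\<dots> \<le> card (Cr \<inter> Rs) + card M1" by (rule card_Un_le)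
      finally have 1: "card Rs \<le> card (Cr \<inter> Rs) + card M1" .
      have "card M2 = card Cr - card (Cr \<inter> Rs)" unfolding M2_def using finCr by (simp add: card_Diff_subset_Int)
      moreover have "card (Cr \<inter> Rs) \<le> card Cr" using finCr by (intro card_mono) auto
      ultimately show ?thesis using 1 by linarith
    qed
    have "card (M X) \<le> card (M1 \<union> M2)" using MX finM1 finM2 by (intro card_mono) auto
    also have "\<dots> \<le> card M1 + card M2" by (rule card_Un_le)
    finally have "card (M X) \<le> card M1 + card M2" .
    hence "real (card (M X)) \<le> real (card M1) + real (card M2)" by linarith
    also have "\<dots> \<le> real N ^ 2 / 2 - real (card Rs) + 2 * real (card M1)" using cM2 cCr by linarith
    also have "\<dots> \<le> real N ^ 2 / 2 - real (card Rs) + 4 * (real N - real (d A + d B)) * real N"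
    proof -
      have "card M1 \<le> 2 * (N - (d A + d B)) * N" using cM1 cRest by simp
      hence "real (card M1) \<le> real (2 * (N - (d A + d B)) * N)" by (simp only: of_nat_le_iff)
      moreover have "real (2 * (N - (d A + d B)) * N) = 2 * ((real N - real (d A + d B)) * real N)"
        using dle by (simp add: of_nat_diff)
      ultimately have "2 * real (card M1) \<le> 4 * ((real N - real (d A + d B)) * real N)" by linarith
      thus ?thesis by (simp add: algebra_simps)
    qed
    also have "\<dots> \<le> 9 * (real N ^ 2 / 2 - real (card Rs))"
      using key by (simp add: algebra_simps power2_eq_square)
    finally show ?thesis using XV unfolding M_def N_def Rs_def by blast
  qed
qed

definition Kset :: "nat \<Rightarrow> nat \<Rightarrow> nat set set" where
  "Kset n m = {C. C \<subseteq> {..<n} \<and> card C = m}"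

lemma finite_Kset[simp]: "finite (Kset n m)"
  unfolding Kset_def by (rule finite_subset[of _ "Pow {..<n}"]) auto

lemma card_Kset: "card (Kset n m) = n choose m"
  unfolding Kset_def using n_subsets[of "{..<n}" m] by simp

lemma Kset_finite_mem: "C \<in> Kset n m \<Longrightarrow> finite C"
  unfolding Kset_def using finite_subset by auto

lemma pair_count:
  assumes "E' \<subseteq> Kset n (2*k)"
  shows "card {(C,D). C \<in> Kset n k \<and> D \<in> Kset n k \<and> C \<inter> D = {} \<and> C \<union> D \<in> E'}
         = card E' * (2*k choose k)"
proof -
  define L where "L = {(C,D). C \<in> Kset n k \<and> D \<in> Kset n k \<and> C \<inter> D = {} \<and> C \<union> D \<in> E'}"
  define T where "T = Sigma E' (\<lambda>S. {C. C \<subseteq> S \<and> card C = k})"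
  have finE: "finite E'" using assms finite_Kset finite_subset by blast
  have bij: "bij_betw (\<lambda>(C,D). (C \<union> D, C)) L T"
  proof (rule bij_betw_byWitness[where f' = "\<lambda>(S,C). (C, S - C)"])
    show "(\<lambda>(C,D). (C \<union> D, C)) ` L \<subseteq> T"
      by (auto simp: L_def T_def Kset_def)
    show "(\<lambda>(S,C). (C, S - C)) ` T \<subseteq> L"
    proof
      fix q assume "q \<in> (\<lambda>(S,C). (C, S - C)) ` T"
      then obtain S C where p: "q = (C, S - C)" "S \<in> E'" "C \<subseteq> S" "card C = k" by (auto simp: T_def)
      have S: "S \<subseteq> {..<n}" "card S = 2*k" using p assms by (auto simp: Kset_def)
      have fS: "finite S" using S finite_subset by auto
      have "card (S - C) = k" using p S fS by (simp add: card_Diff_subset finite_subset)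
      moreover have "C \<union> (S - C) = S" using p by auto
      ultimately show "q \<in> L" using p S by (auto simp: L_def Kset_def)
    qed
    show "\<forall>x\<in>L. (\<lambda>(S,C). (C, S - C)) ((\<lambda>(C,D). (C \<union> D, C)) x) = x"
      by (auto simp: L_def)
    show "\<forall>y\<in>T. (\<lambda>(C,D). (C \<union> D, C)) ((\<lambda>(S,C). (C, S - C)) y) = y"
      by (auto simp: T_def)
  qed
  have "card L = card T" using bij by (rule bij_betw_same_card)
  also have "card T = (\<Sum>S\<in>E'. card {C. C \<subseteq> S \<and> card C = k})"
    unfolding T_def using finE
  proof (intro card_SigmaI finE ballI)
    fix S assume "S \<in> E'"
    hence "finite S" using assms Kset_finite_mem by blast
    thus "finite {C. C \<subseteq> S \<and> card C = k}" by (rule finite_subset[rotated, OF finite_Pow_iff[THEN iffD2]]) auto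
  qed
  also have "\<dots> = (\<Sum>S\<in>E'. (2*k choose k))"
  proof (rule sum.cong)
    fix S assume "S \<in> E'"
    hence "S \<in> Kset n (2*k)" using assms by auto
    hence "finite S" "card S = 2*k" by (rule Kset_finite_mem) (use \<open>S \<in> Kset n (2*k)\<close> in \<open>simp add: Kset_def\<close>)
    thus "card {C. C \<subseteq> S \<and> card C = k} = (2*k choose k)" using n_subsets[of S k] by simp
  qed simp
  finally show ?thesis by (simp add: L_def)
qed

lemma card_contain:
  assumes "m \<ge> 1"
  shows "card {C \<in> Kset n m. i \<in> C} \<le> n^(m-1)"
proof -
  have "card {C \<in> Kset n m. i \<in> C} \<le> card (Kset n (m-1))"
  proof (rule card_inj_on_le[where f = "\<lambda>C. C - {i}"])
    show "inj_on (\<lambda>C. C - {i}) {C \<in> Kset n m. i \<in> C}"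
      by (auto simp: inj_on_def)
    show "(\<lambda>C. C - {i}) ` {C \<in> Kset n m. i \<in> C} \<subseteq> Kset n (m-1)"
      using Kset_finite_mem by (auto simp: Kset_def)
  qed simp
  also have "\<dots> \<le> n^(m-1)"
  proof (cases "m - 1 \<le> n")
    case True thus ?thesis by (simp add: card_Kset binomial_le_pow)
  next
    case False thus ?thesis by (simp add: card_Kset binomial_eq_0)
  qed
  finally show ?thesis .
qed

lemma KK_bound:
  assumes k1: "k \<ge> 1"
  shows "card (Kset n k)^2 \<le> (n choose (2*k)) * (2*k choose k) + n^(2*k-1)"
proof -
  define K where "K = Kset n k"
  define Dj where "Dj = {(C,D). C \<in> K \<and> D \<in> K \<and> C \<inter> D = {} \<and> C \<union> D \<in> Kset n (2*k)}"
  define Ki where "Ki i = {C \<in> K. i \<in> C}" for i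
  have "K \<times> K \<subseteq> Dj \<union> (\<Union>i<n. Ki i \<times> Ki i)"
  proof
    fix p assume "p \<in> K \<times> K"
    then obtain C D where p: "p = (C,D)" "C \<in> K" "D \<in> K" by auto
    show "p \<in> Dj \<union> (\<Union>i<n. Ki i \<times> Ki i)"
    proof (cases "C \<inter> D = {}")
      case True
      have "finite C" "finite D" using p Kset_finite_mem by (auto simp: K_def)
      hence "card (C \<union> D) = 2*k" using True p by (simp add: card_Un_disjoint K_def Kset_def)
      hence "C \<union> D \<in> Kset n (2*k)" using p by (auto simp: K_def Kset_def)
      thus ?thesis using True p by (auto simp: Dj_def)
    next
      case False
      then obtain i where "i \<in> C" "i \<in> D" by auto
      moreover have "i < n" using p \<open>i \<in> C\<close> by (auto simp: K_def Kset_def)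
      ultimately show ?thesis using p by (auto simp: Ki_def)
    qed
  qed
  hence "card (K \<times> K) \<le> card (Dj \<union> (\<Union>i<n. Ki i \<times> Ki i))"
  proof (rule card_mono[rotated])
    have "Dj \<union> (\<Union>i<n. Ki i \<times> Ki i) \<subseteq> K \<times> K" by (auto simp: Dj_def Ki_def)
    thus "finite (Dj \<union> (\<Union>i<n. Ki i \<times> Ki i))" by (rule finite_subset) (simp add: K_def)
  qed
  also have "\<dots> \<le> card Dj + card (\<Union>i<n. Ki i \<times> Ki i)" by (rule card_Un_le)
  also have "card (\<Union>i<n. Ki i \<times> Ki i) \<le> (\<Sum>i<n. card (Ki i \<times> Ki i))" by (rule card_UN_le) simp
  also have "\<dots> \<le> (\<Sum>i<n. n^(k-1) * n^(k-1))"
  proof (rule sum_mono)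
    fix i
    have "card (Ki i) \<le> n^(k-1)" using card_contain[OF k1, of n i] by (simp add: Ki_def K_def)
    thus "card (Ki i \<times> Ki i) \<le> n^(k-1) * n^(k-1)" by (simp add: card_cartesian_product mult_le_mono)
  qed
  also have "\<dots> = n^(2*k-1)"
  proof -
    have "n * (n^(k-1) * n^(k-1)) = n^(1 + (k-1) + (k-1))" by (simp add: power_add)
    also have "1 + (k-1) + (k-1) = 2*k-1" using k1 by simp
    finally show ?thesis by simp
  qed
  also have "card Dj = (n choose (2*k)) * (2*k choose k)"
    using pair_count[of "Kset n (2*k)" n k] by (simp add: Dj_def K_def card_Kset)
  finally show ?thesis by (simp add: K_def power2_eq_square card_cartesian_product)
qed

definition IC :: "nat \<Rightarrow> nat \<Rightarrow> nat set" where "IC k i = {k..<k+i} \<union> {i..<k}"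
definition IP :: "nat \<Rightarrow> nat \<Rightarrow> nat set" where "IP k i = {k..<k+i} \<union> {Suc i..<k}"
definition IR :: "nat \<Rightarrow> nat \<Rightarrow> nat set" where "IR k i = {..<i} \<union> {Suc (k+i)..<2*k}"

lemma IC_P1: "i < k \<Longrightarrow> IC k i = insert i (IP k i)"
  by (auto simp: IC_def IP_def)
lemma IC_P2: "i < k \<Longrightarrow> IC k (Suc i) = insert (k+i) (IP k i)"
  by (auto simp: IC_def IP_def)
lemma IP_notin1: "i < k \<Longrightarrow> i \<notin> IP k i"
  by (simp add: IP_def)
lemma IP_notin2: "i < k \<Longrightarrow> k + i \<notin> IP k i"
  by (simp add: IP_def)
lemma IP_sub: assumes "i < k" shows "IP k i \<subseteq> {..<2*k}" using assms by (auto simp: IP_def)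
lemma IR_sub: assumes "i < k" shows "IR k i \<subseteq> {..<2*k}" using assms by (auto simp: IR_def)
lemma IC_sub: "i \<le> k \<Longrightarrow> IC k i \<subseteq> {..<2*k}" by (auto simp: IC_def)
lemma card_IP: "i < k \<Longrightarrow> card (IP k i) = k - 1"
proof -
  assume "i < k"
  have "card (IP k i) = card {k..<k+i} + card {Suc i..<k}" unfolding IP_def
    by (rule card_Un_disjoint) auto
  thus ?thesis using \<open>i < k\<close> by simp
qed
lemma card_IR: "i < k \<Longrightarrow> card (IR k i) = k - 1"
proof -
  assume "i < k"
  have "card (IR k i) = card {..<i} + card {Suc (k+i)..<2*k}" unfolding IR_def
    by (rule card_Un_disjoint) auto
  thus ?thesis using \<open>i < k\<close> by simp
qed
lemma I_union: "i < k \<Longrightarrow> IP k i \<union> {i, k+i} \<union> IR k i = {..<2*k}"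
  by (auto simp: IP_def IR_def)
lemma IC_0: "IC k 0 = {..<k}" by (auto simp: IC_def)
lemma IC_k: "IC k k = {k..<2*k}" by (auto simp: IC_def)

lemma tele:
  fixes f :: "nat \<Rightarrow> nat"
  shows "even (f 0 + f m + (\<Sum>i<m. f i + f (Suc i)))"
proof (induction m)
  case 0 thus ?case by simp
next
  case (Suc m)
  have eq: "f 0 + f (Suc m) + (\<Sum>i<Suc m. f i + f (Suc i)) = (f 0 + f m + (\<Sum>i<m. f i + f (Suc i))) + 2 * f (Suc m)"
    by simp
  show ?case unfolding eq by (rule dvd_add[OF Suc.IH dvd_triv_left])
qed

lemma sum_split_k:
  fixes g :: "nat \<Rightarrow> nat"
  shows "(\<Sum>j<k+m. g j) = (\<Sum>j<k. g j) + (\<Sum>i<m. g (k+i))"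
  by (induction m) auto

lemma par3: "even ((a::nat) + b) \<Longrightarrow> even (c + a) \<Longrightarrow> even (c + b)" by presburger

lemma parity_bool: "even ((if a then 1 else 0) + (if b then 1 else 0) + (c::nat)) \<Longrightarrow> (a \<noteq> b) = odd c"
  by (cases a; cases b) simp_all

lemma odd_sub: "c \<le> 2*k \<Longrightarrow> odd (2*k - c) = odd (c::nat)" by presburger

lemma parity4: "((a = b) = (c = d)) \<Longrightarrow> even ((if a then 1 else 0) + (if b then 1 else 0) + ((if c then 1 else 0) + (if d then 1 else (0::nat))))"
  by (cases a; cases b; cases c; cases d) simp_all

lemma perS_correct:
  fixes h :: "nat \<Rightarrow> nat" and g :: "nat \<Rightarrow> bool" and X :: "nat set set"
  assumes k1: "k \<ge> 1" and hb: "bij_betw h {..<2*k} S" and Sn: "S \<subseteq> {..<n}"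
    and nomis: "(S \<in> E) = ((h ` {..<k} \<in> X) \<noteq> (h ` {k..<2*k} \<in> X))"
    and steps: "\<And>i. i < k \<Longrightarrow> ((h ` IC k i \<in> X) = (h ` IC k (Suc i) \<in> X)) = (g (h i) = g (h (k+i)))"
  shows "correct_set E {s. s < n \<and> g s} ({..<n} - {s. s < n \<and> g s}) S"
proof -
  define V1 where "V1 = {s. s < n \<and> g s}"
  define f where "f i = (if h ` IC k i \<in> X then 1 else 0 :: nat)" for i
  define gg where "gg s = (if g s then 1 else 0 :: nat)" for s
  have st: "even (f i + f (Suc i) + (gg (h i) + gg (h (k+i))))" if "i < k" for i
    unfolding f_def gg_def by (rule parity4[OF steps[OF that]])
  have e0: "even (\<Sum>i<k. f i + f (Suc i) + (gg (h i) + gg (h (k+i))))"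
    by (rule dvd_sum) (rule st, simp)
  have e1: "even ((\<Sum>i<k. f i + f (Suc i)) + (\<Sum>i<k. gg (h i) + gg (h (k+i))))"
    using e0 by (simp only: sum.distrib)
  have fS: "finite S" using Sn finite_subset by auto
  have "(\<Sum>i<k. gg (h i) + gg (h (k+i))) = (\<Sum>j<k+k. gg (h j))"
    by (simp only: sum.distrib sum_split_k)
  also have "\<dots> = (\<Sum>j<2*k. gg (h j))" by (simp only: mult_2)
  also have "\<dots> = (\<Sum>s\<in>S. gg s)" using sum.reindex_bij_betw[OF hb, of gg] .
  also have "\<dots> = card {s \<in> S. g s}" unfolding gg_def
      using fS by (simp add: sum.If_cases Int_def)
  also have "{s \<in> S. g s} = S \<inter> V1" using Sn by (auto simp: V1_def)
  finally have G: "(\<Sum>i<k. gg (h i) + gg (h (k+i))) = card (S \<inter> V1)" .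
  have e2: "even ((\<Sum>i<k. f i + f (Suc i)) + card (S \<inter> V1))" using e1 unfolding G .
  have e3: "even (f 0 + f k + (\<Sum>i<k. f i + f (Suc i)))" by (rule tele)
  have e4: "even (f 0 + f k + card (S \<inter> V1))" by (rule par3[OF e2 e3])
  have C0: "h ` IC k 0 = h ` {..<k}" by (simp add: IC_0)
  have Ck: "h ` IC k k = h ` {k..<2*k}" by (simp add: IC_k)
  have f0: "f 0 = (if h ` {..<k} \<in> X then 1 else 0)" unfolding f_def C0 ..
  have fk: "f k = (if h ` {k..<2*k} \<in> X then 1 else 0)" unfolding f_def Ck ..
  have SE: "(S \<in> E) = odd (card (S \<inter> V1))"
    unfolding nomis by (rule parity_bool) (use e4 in \<open>simp only: f0 fk\<close>)
  have cS: "card S = 2*k" using hb by (simp add: bij_betw_same_card[symmetric])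
  have "S \<inter> ({..<n} - V1) = S - (S \<inter> V1)" using Sn by auto
  hence c2: "card (S \<inter> ({..<n} - V1)) = 2*k - card (S \<inter> V1)"
    using fS cS by (simp add: card_Diff_subset)
  have le: "card (S \<inter> V1) \<le> 2*k" using card_mono[OF fS Int_lower1, of V1] cS by simp
  have par: "odd (2*k - card (S \<inter> V1)) = odd (card (S \<inter> V1))" using le by (rule odd_sub)
  have gd: "good_set V1 ({..<n} - V1) S = odd (card (S \<inter> V1))"
    unfolding good_set_def c2 par by simp
  have "correct_set E V1 ({..<n} - V1) S" unfolding correct_set_def gd SE by simp
  thus ?thesis unfolding V1_def .
qed

definition Mis :: "nat \<Rightarrow> nat \<Rightarrow> nat set set \<Rightarrow> nat set set \<Rightarrow> (nat set \<times> nat set) set" where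
  "Mis n k E X = {(C,D) \<in> Kset n k \<times> Kset n k. (C \<inter> D = {} \<and> C \<union> D \<in> E) \<noteq> ((C\<in>X) \<noteq> (D\<in>X))}"

definition bad :: "nat \<Rightarrow> nat \<Rightarrow> nat set set \<Rightarrow> nat set \<Rightarrow> (nat set \<times> nat \<times> nat) set" where
  "bad n k X W = {(P,a,b). P \<in> Kset n (k-1) \<and> P \<inter> W = {} \<and> a < n \<and> b < n \<and> a \<notin> P \<and> a \<notin> W \<and>
      b \<notin> P \<and> b \<notin> W \<and> a \<noteq> b \<and>
      ((insert a P \<in> X) = (insert b P \<in> X)) \<noteq> ((insert a W \<in> X) = (insert b W \<in> X))}"

lemma finite_Mis: "finite (Mis n k E X)"
  by (rule finite_subset[of _ "Kset n k \<times> Kset n k"]) (auto simp: Mis_def)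

lemma finite_bad: "finite (bad n k X W)"
  by (rule finite_subset[of _ "Kset n (k-1) \<times> {..<n} \<times> {..<n}"]) (auto simp: bad_def)

lemma insert_Kset:
  assumes k1: "k \<ge> 1" and "P \<in> Kset n (k-1)" "a < n" "a \<notin> P"
  shows "insert a P \<in> Kset n k"
proof -
  have "finite P" using assms(2) by (rule Kset_finite_mem)
  thus ?thesis using assms by (auto simp: Kset_def)
qed

lemma xor4: "(A::bool) = ((p::bool) \<noteq> q) \<Longrightarrow> A = ((r::bool) \<noteq> (s::bool)) \<Longrightarrow> ((p = r) \<noteq> (s = q)) \<Longrightarrow> False"
  by (cases p; cases q; cases r; cases s) auto

lemma bad_mis:
  assumes k1: "k \<ge> 1" and W: "W \<in> Kset n (k-1)" and t: "(P,a,b) \<in> bad n k X W"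
  shows "(insert a P, insert b W) \<in> Mis n k E X \<or> (insert b P, insert a W) \<in> Mis n k E X"
proof -
  have P: "P \<in> Kset n (k-1)" and c: "P \<inter> W = {}" "a < n" "b < n" "a \<notin> P" "a \<notin> W" "b \<notin> P" "b \<notin> W" "a \<noteq> b"
    and bd: "((insert a P \<in> X) = (insert b P \<in> X)) \<noteq> ((insert a W \<in> X) = (insert b W \<in> X))"
    using t by (auto simp: bad_def)
  have K: "insert a P \<in> Kset n k" "insert b W \<in> Kset n k" "insert b P \<in> Kset n k" "insert a W \<in> Kset n k"
    using insert_Kset[OF k1] P W c by auto
  have d1: "insert a P \<inter> insert b W = {}" using c by auto
  have d2: "insert b P \<inter> insert a W = {}" using c by auto
  have u: "insert a P \<union> insert b W = insert b P \<union> insert a W" by auto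
  show ?thesis
  proof (rule ccontr)
    assume "\<not> ?thesis"
    hence 1: "(insert a P \<union> insert b W \<in> E) = ((insert a P \<in> X) \<noteq> (insert b W \<in> X))"
          and 2: "(insert b P \<union> insert a W \<in> E) = ((insert b P \<in> X) \<noteq> (insert a W \<in> X))"
      using K d1 d2 unfolding Mis_def by blast+
    show False by (rule xor4[OF 1 2[folded u] bd])
  qed
qed

lemma sum_bad:
  assumes k1: "k \<ge> 1"
  shows "(\<Sum>W\<in>Kset n (k-1). card (bad n k X W)) \<le> 2*k*k * card (Mis n k E X)"
proof -
  define M where "M = Mis n k E X"
  define Tot where "Tot = Sigma (Kset n (k-1)) (bad n k X)"
  define G where "G (C::nat set) (D::nat set) = (\<lambda>(a,b). (D - {b}, C - {a}, a, b)) ` (C \<times> D) \<union> (\<lambda>(b,a). (D - {a}, C - {b}, a, b)) ` (C \<times> D)" for C D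
  have cT: "card Tot = (\<Sum>W\<in>Kset n (k-1). card (bad n k X W))"
    unfolding Tot_def by (rule card_SigmaI) (auto simp: finite_bad)
  have sub: "Tot \<subseteq> (\<Union>p\<in>M. G (fst p) (snd p))"
  proof
    fix t assume "t \<in> Tot"
    then obtain W P a b where t: "t = (W,P,a,b)" "W \<in> Kset n (k-1)" "(P,a,b) \<in> bad n k X W"
      by (auto simp: Tot_def)
    have c: "a \<notin> P" "a \<notin> W" "b \<notin> P" "b \<notin> W" using t(3) by (auto simp: bad_def)
    from bad_mis[OF k1 t(2) t(3), of E] show "t \<in> (\<Union>p\<in>M. G (fst p) (snd p))"
    proof
      assume m: "(insert a P, insert b W) \<in> Mis n k E X"
      have "t = (\<lambda>(a',b'). (insert b W - {b'}, insert a P - {a'}, a', b')) (a,b)" using t c by auto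
      hence "t \<in> G (insert a P) (insert b W)" unfolding G_def by blast
      thus ?thesis using m unfolding M_def by force
    next
      assume m: "(insert b P, insert a W) \<in> Mis n k E X"
      have "t = (\<lambda>(b',a'). (insert a W - {a'}, insert b P - {b'}, a', b')) (b,a)" using t c by auto
      hence "t \<in> G (insert b P) (insert a W)" unfolding G_def by blast
      thus ?thesis using m unfolding M_def by force
    qed
  qed
  have "card Tot \<le> card (\<Union>p\<in>M. G (fst p) (snd p))"
  proof (rule card_mono[OF _ sub], rule finite_UN_I)
    show "finite M" by (simp add: M_def finite_Mis)
    fix p assume "p \<in> M"
    then obtain C D where p: "p = (C,D)" "C \<in> Kset n k" "D \<in> Kset n k" by (auto simp: M_def Mis_def)
    have fC: "finite C" "finite D" using p Kset_finite_mem by auto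
    show "finite (G (fst p) (snd p))" using fC p by (simp add: G_def)
  qed
  also have "\<dots> \<le> (\<Sum>p\<in>M. card (G (fst p) (snd p)))" by (rule card_UN_le) (simp add: M_def finite_Mis)
  also have "\<dots> \<le> (\<Sum>p\<in>M. 2*k*k)"
  proof (rule sum_mono)
    fix p assume "p \<in> M"
    then obtain C D where p: "p = (C,D)" "C \<in> Kset n k" "D \<in> Kset n k" by (auto simp: M_def Mis_def)
    have fC: "finite C" "finite D" using p Kset_finite_mem by auto
    have cC: "card C = k" "card D = k" using p by (auto simp: Kset_def)
    have "card (G C D) \<le> card ((\<lambda>(a,b). (D - {b}, C - {a}, a, b)) ` (C \<times> D)) + card ((\<lambda>(b,a). (D - {a}, C - {b}, a, b)) ` (C \<times> D))"
      unfolding G_def by (rule card_Un_le)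
    also have "\<dots> \<le> card (C \<times> D) + card (C \<times> D)"
      by (intro add_mono card_image_le) (use fC in auto)
    also have "\<dots> = 2*k*k" using cC by (simp add: card_cartesian_product)
    finally show "card (G (fst p) (snd p)) \<le> 2*k*k" using p by simp
  qed
  also have "\<dots> = 2*k*k * card M" by simp
  finally show ?thesis using cT by (simp add: M_def)
qed

definition enum :: "nat \<Rightarrow> nat set \<Rightarrow> nat \<Rightarrow> nat" where
  "enum k S = (SOME h. bij_betw h {..<2*k} S)"

lemma enum_bij:
  assumes "finite S" "card S = 2*k"
  shows "bij_betw (enum k S) {..<2*k} S"
proof -
  obtain h where "bij_betw h {0..<card S} S" using ex_bij_betw_nat_finite[OF assms(1)] by blast
  hence "\<exists>h. bij_betw h {..<2*k} S" using assms(2) by (auto simp: atLeast0LessThan)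
  thus ?thesis unfolding enum_def by (rule someI_ex)
qed

lemma img_card:
  assumes "bij_betw h {..<2*k} S" "I \<subseteq> {..<2*k}"
  shows "card (h ` I) = card I"
  using assms by (meson bij_betw_def card_image inj_on_subset)

lemma img_mem:
  assumes "bij_betw h {..<2*k} S" "I \<subseteq> {..<2*k}" "j < 2*k"
  shows "(h j \<in> h ` I) = (j \<in> I)"
  using assms by (meson bij_betw_def inj_on_image_mem_iff lessThan_iff)

lemma img_sub:
  assumes "bij_betw h {..<2*k} S" "I \<subseteq> {..<2*k}"
  shows "h ` I \<subseteq> S"
  using assms by (metis bij_betw_def image_mono)

lemma ivl_split: "{..<k} \<union> {k..<2*k} = {..<(2*k::nat)}" by auto

lemma comb_main:
  assumes k1: "k \<ge> 1" and nk: "k \<le> n"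
  shows "\<exists>V1\<subseteq>{..<n}. card {S. S \<subseteq> {..<n} \<and> card S = 2*k \<and> \<not> correct_set E V1 ({..<n} - V1) S}
           \<le> (k-1) * n^(2*k-1) + (1 + 2*k^3) * card (Mis n k E X)"
proof -
  define M where "M = Mis n k E X"
  define Ws where "Ws = Kset n (k-1)"
  have Wsne: "Ws \<noteq> {}"
  proof -
    have "card Ws = n choose (k-1)" by (simp add: Ws_def card_Kset)
    moreover have "n choose (k-1) > 0" using nk by simp
    ultimately show ?thesis by auto
  qed
  obtain W0 where W0: "W0 \<in> Ws" "card Ws * card (bad n k X W0) \<le> (\<Sum>W\<in>Ws. card (bad n k X W))"
    using exists_le_avg[of Ws "\<lambda>W. card (bad n k X W)"] Wsne by (auto simp: Ws_def)
  have W0b: "card Ws * card (bad n k X W0) \<le> 2*k*k * card M"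
    using W0(2) sum_bad[OF k1, of n X E] by (simp add: Ws_def M_def)
  have W0K: "W0 \<subseteq> {..<n}" "card W0 = k-1" "finite W0"
    using W0(1) Kset_finite_mem[of W0 n "k-1"] by (simp_all add: Ws_def Kset_def)
  define g where "g s = (insert s W0 \<in> X)" for s
  define V1 where "V1 = {s. s < n \<and> g s}"
  define h where "h S = enum k S" for S
  define Bd where "Bd = {S. S \<subseteq> {..<n} \<and> card S = 2*k \<and> \<not> correct_set E V1 ({..<n} - V1) S}"
  define BA where "BA = {S \<in> Kset n (2*k). S \<inter> W0 \<noteq> {}}"
  define BB where "BB = {S \<in> Kset n (2*k). (h S ` {..<k}, h S ` {k..<2*k}) \<in> M}"
  define BC where "BC i = {S \<in> Kset n (2*k). S \<inter> W0 = {} \<and> (h S ` IP k i, h S i, h S (k+i)) \<in> bad n k X W0}" for i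
  have hb: "bij_betw (h S) {..<2*k} S" if "S \<in> Kset n (2*k)" for S
    unfolding h_def using that Kset_finite_mem[OF that] by (intro enum_bij) (auto simp: Kset_def)
  have cover: "Bd \<subseteq> BA \<union> BB \<union> (\<Union>i<k. BC i)"
  proof
    fix S assume SB: "S \<in> Bd"
    hence SK: "S \<in> Kset n (2*k)" by (auto simp: Bd_def Kset_def)
    have Sn: "S \<subseteq> {..<n}" using SK by (auto simp: Kset_def)
    show "S \<in> BA \<union> BB \<union> (\<Union>i<k. BC i)"
    proof (rule ccontr)
      assume "\<not> ?thesis"
      hence nA: "S \<inter> W0 = {}" and nB: "(h S ` {..<k}, h S ` {k..<2*k}) \<notin> M"
        and nC: "\<And>i. i < k \<Longrightarrow> (h S ` IP k i, h S i, h S (k+i)) \<notin> bad n k X W0"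
        using SK by (auto simp: BA_def BB_def BC_def)
      have hbS: "bij_betw (h S) {..<2*k} S" by (rule hb[OF SK])
      have nomis: "(S \<in> E) = ((h S ` {..<k} \<in> X) \<noteq> (h S ` {k..<2*k} \<in> X))"
      proof -
        have s1: "{..<k} \<subseteq> {..<2*k}" "{k..<2*k} \<subseteq> {..<2*k}" by auto
        have K1: "h S ` {..<k} \<in> Kset n k" "h S ` {k..<2*k} \<in> Kset n k"
          using img_card[OF hbS s1(1)] img_card[OF hbS s1(2)] img_sub[OF hbS s1(1)] img_sub[OF hbS s1(2)] Sn
          by (auto simp: Kset_def)
        have "h S ` {..<k} \<inter> h S ` {k..<2*k} = h S ` ({..<k} \<inter> {k..<2*k})"
          using hbS s1 by (metis bij_betw_def inj_on_image_Int)
        hence d: "h S ` {..<k} \<inter> h S ` {k..<2*k} = {}" by auto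
        have "h S ` {..<k} \<union> h S ` {k..<2*k} = h S ` {..<2*k}" unfolding image_Un[symmetric] ivl_split by (rule refl)
        hence u: "h S ` {..<k} \<union> h S ` {k..<2*k} = S" using hbS by (simp add: bij_betw_def)
        show ?thesis using nB K1 d u unfolding M_def Mis_def by auto
      qed
      have steps: "((h S ` IC k i \<in> X) = (h S ` IC k (Suc i) \<in> X)) = (g (h S i) = g (h S (k+i)))"
        if ik: "i < k" for i
      proof -
        have IPs: "IP k i \<subseteq> {..<2*k}" using IP_sub[OF ik] .
        have i2: "i < 2*k" "k+i < 2*k" using ik by auto
        have PK: "h S ` IP k i \<in> Kset n (k-1)"
          using img_card[OF hbS IPs] card_IP[OF ik] img_sub[OF hbS IPs] Sn by (auto simp: Kset_def)
        have PW: "h S ` IP k i \<inter> W0 = {}" using img_sub[OF hbS IPs] nA by auto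
        have inS: "h S i \<in> S" "h S (k+i) \<in> S" using hbS i2 by (auto simp: bij_betw_def)
        have lt: "h S i < n" "h S (k+i) < n" using inS Sn by auto
        have nW: "h S i \<notin> W0" "h S (k+i) \<notin> W0" using inS nA by auto
        have nP: "h S i \<notin> h S ` IP k i" "h S (k+i) \<notin> h S ` IP k i"
          using img_mem[OF hbS IPs i2(1)] img_mem[OF hbS IPs i2(2)] IP_notin1[OF ik] IP_notin2[OF ik] by auto
        have ne: "h S i \<noteq> h S (k+i)"
        proof
          assume eq: "h S i = h S (k+i)"
          have inj: "inj_on (h S) {..<2*k}" using hbS by (simp add: bij_betw_def)
          have "i = k + i" by (rule inj_onD[OF inj eq]) (use i2 in simp_all)
          thus False using k1 by simp
        qed
        have "((insert (h S i) (h S ` IP k i) \<in> X) = (insert (h S (k+i)) (h S ` IP k i) \<in> X))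
              = ((insert (h S i) W0 \<in> X) = (insert (h S (k+i)) W0 \<in> X))"
          using nC[OF ik] PK PW lt nW nP ne unfolding bad_def by blast
        moreover have "h S ` IC k i = insert (h S i) (h S ` IP k i)" by (simp add: IC_P1[OF ik])
        moreover have "h S ` IC k (Suc i) = insert (h S (k+i)) (h S ` IP k i)" by (simp add: IC_P2[OF ik])
        ultimately show ?thesis by (simp add: g_def)
      qed
      have "correct_set E {s. s < n \<and> g s} ({..<n} - {s. s < n \<and> g s}) S"
        by (rule perS_correct[OF k1 hbS Sn nomis steps])
      thus False using SB by (simp add: Bd_def V1_def)
    qed
  qed
  have cBA: "card BA \<le> (k-1) * n^(2*k-1)"
  proof -
    have "BA \<subseteq> (\<Union>w\<in>W0. {C \<in> Kset n (2*k). w \<in> C})" by (auto simp: BA_def)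
    hence "card BA \<le> card (\<Union>w\<in>W0. {C \<in> Kset n (2*k). w \<in> C})"
      by (intro card_mono finite_UN_I W0K(3)) simp_all
    also have "\<dots> \<le> (\<Sum>w\<in>W0. card {C \<in> Kset n (2*k). w \<in> C})" by (rule card_UN_le[OF W0K(3)])
    also have "\<dots> \<le> (\<Sum>w\<in>W0. n^(2*k-1))" by (rule sum_mono) (rule card_contain, use k1 in simp)
    also have "\<dots> = (k-1) * n^(2*k-1)" using W0K by simp
    finally show ?thesis .
  qed
  have cBB: "card BB \<le> card M"
  proof (rule card_inj_on_le[where f = "\<lambda>S. (h S ` {..<k}, h S ` {k..<2*k})"])
    show "inj_on (\<lambda>S. (h S ` {..<k}, h S ` {k..<2*k})) BB"
    proof (rule inj_onI)
      fix S T assume ST: "S \<in> BB" "T \<in> BB" "(h S ` {..<k}, h S ` {k..<2*k}) = (h T ` {..<k}, h T ` {k..<2*k})"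
      have u: "h U ` {..<k} \<union> h U ` {k..<2*k} = U" if "U \<in> BB" for U
      proof -
        have "h U ` {..<k} \<union> h U ` {k..<2*k} = h U ` {..<2*k}" unfolding image_Un[symmetric] ivl_split by (rule refl)
        thus ?thesis using hb[of U] that by (simp add: bij_betw_def BB_def)
      qed
      from ST(3) have e: "h S ` {..<k} = h T ` {..<k}" "h S ` {k..<2*k} = h T ` {k..<2*k}" by simp_all
      have "S = h S ` {..<k} \<union> h S ` {k..<2*k}" using u[OF ST(1)] by simp
      also have "\<dots> = h T ` {..<k} \<union> h T ` {k..<2*k}" unfolding e ..
      also have "\<dots> = T" by (rule u[OF ST(2)])
      finally show "S = T" .
    qed
    show "(\<lambda>S. (h S ` {..<k}, h S ` {k..<2*k})) ` BB \<subseteq> M"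
    proof
      fix q assume "q \<in> (\<lambda>S. (h S ` {..<k}, h S ` {k..<2*k})) ` BB"
      then obtain S where "S \<in> BB" "q = (h S ` {..<k}, h S ` {k..<2*k})" by blast
      thus "q \<in> M" by (simp add: BB_def)
    qed
    show "finite M" by (simp add: M_def finite_Mis)
  qed
  have cBC: "card (BC i) \<le> 2*k*k * card M" if ik: "i < k" for i
  proof -
    have "card (BC i) \<le> card (bad n k X W0 \<times> Ws)"
    proof (rule card_inj_on_le[where f = "\<lambda>S. ((h S ` IP k i, h S i, h S (k+i)), h S ` IR k i)"])
      show "inj_on (\<lambda>S. ((h S ` IP k i, h S i, h S (k+i)), h S ` IR k i)) (BC i)"
      proof (rule inj_onI)
        fix S T assume ST: "S \<in> BC i" "T \<in> BC i"
          "((h S ` IP k i, h S i, h S (k+i)), h S ` IR k i) = ((h T ` IP k i, h T i, h T (k+i)), h T ` IR k i)"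
        have u: "h U ` IP k i \<union> {h U i, h U (k+i)} \<union> h U ` IR k i = U" if "U \<in> BC i" for U
        proof -
          have "h U ` IP k i \<union> {h U i, h U (k+i)} \<union> h U ` IR k i = h U ` (IP k i \<union> {i, k+i} \<union> IR k i)"
            by (simp add: image_Un)
          also have "\<dots> = h U ` {..<2*k}" using I_union[OF ik] by simp
          finally show ?thesis using hb[of U] that by (simp add: bij_betw_def BC_def)
        qed
        from ST(3) have e: "h S ` IP k i = h T ` IP k i" "h S i = h T i" "h S (k+i) = h T (k+i)"
          "h S ` IR k i = h T ` IR k i" by simp_all
        have "S = h S ` IP k i \<union> {h S i, h S (k+i)} \<union> h S ` IR k i" using u[OF ST(1)] by simp
        also have "\<dots> = h T ` IP k i \<union> {h T i, h T (k+i)} \<union> h T ` IR k i" unfolding e ..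
        also have "\<dots> = T" by (rule u[OF ST(2)])
        finally show "S = T" .
      qed
      show "(\<lambda>S. ((h S ` IP k i, h S i, h S (k+i)), h S ` IR k i)) ` BC i \<subseteq> bad n k X W0 \<times> Ws"
      proof
        fix q assume "q \<in> (\<lambda>S. ((h S ` IP k i, h S i, h S (k+i)), h S ` IR k i)) ` BC i"
        then obtain S where S: "S \<in> BC i" "q = ((h S ` IP k i, h S i, h S (k+i)), h S ` IR k i)" by auto
        have SK: "S \<in> Kset n (2*k)" using S by (simp add: BC_def)
        have IRs: "IR k i \<subseteq> {..<2*k}" by (rule IR_sub[OF ik])
        have "h S ` IR k i \<in> Ws"
          using img_card[OF hb[OF SK] IRs] card_IR[OF ik] img_sub[OF hb[OF SK] IRs] SK
          by (auto simp: Kset_def Ws_def)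
        thus "q \<in> bad n k X W0 \<times> Ws" using S by (simp add: BC_def)
      qed
      show "finite (bad n k X W0 \<times> Ws)" by (simp add: finite_bad Ws_def)
    qed
    also have "\<dots> = card Ws * card (bad n k X W0)" by (simp add: card_cartesian_product)
    also have "\<dots> \<le> 2*k*k * card M" by (rule W0b)
    finally show ?thesis .
  qed
  have "card Bd \<le> card (BA \<union> BB \<union> (\<Union>i<k. BC i))"
  proof (rule card_mono[OF _ cover])
    have "BA \<union> BB \<union> (\<Union>i<k. BC i) \<subseteq> Kset n (2*k)" by (auto simp: BA_def BB_def BC_def)
    thus "finite (BA \<union> BB \<union> (\<Union>i<k. BC i))" by (rule finite_subset) simp
  qed
  also have "\<dots> \<le> card (BA \<union> BB) + card (\<Union>i<k. BC i)" by (rule card_Un_le)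
  also have "card (BA \<union> BB) \<le> card BA + card BB" by (rule card_Un_le)
  also have "card (\<Union>i<k. BC i) \<le> (\<Sum>i<k. card (BC i))" by (rule card_UN_le) simp
  also have "\<dots> \<le> (\<Sum>i<k. 2*k*k * card M)" by (rule sum_mono) (rule cBC, simp)
  also have "\<dots> = k * (2*k*k * card M)" by simp
  finally have "card Bd \<le> (k-1) * n^(2*k-1) + card M + k * (2*k*k * card M)" using cBA cBB by linarith
  also have "\<dots> = (k-1) * n^(2*k-1) + (1 + 2*k^3) * card M" by (simp add: power3_eq_cube algebra_simps)
  finally have cb: "card Bd \<le> (k-1) * n^(2*k-1) + (1 + 2*k^3) * card M" .
  have sub: "V1 \<subseteq> {..<n}" by (auto simp: V1_def)
  show ?thesis unfolding M_def[symmetric] by (rule exI[of _ V1], rule conjI[OF sub cb[unfolded Bd_def]])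
qed

lemma main_bound:
  assumes k1: "k \<ge> 1" and nk: "k \<le> n" and unif: "uniform_hypergraph (2*k) {..<n} E"
    and nC3: "\<not> contains_C3 k {..<n} E"
  shows "\<exists>V1\<subseteq>{..<n}. real (card {S. S \<subseteq> {..<n} \<and> card S = 2*k \<and> \<not> correct_set E V1 ({..<n} - V1) S})
    \<le> real ((k-1) * n^(2*k-1)) + real (1 + 2*k^3) * (9 * (real n^(2*k-1)/2 + real (2*k choose k) * (real (n choose (2*k))/2 - real (card E))))"
proof -
  define K where "K = Kset n k"
  define R where "R C D = (C \<in> K \<and> D \<in> K \<and> C \<inter> D = {} \<and> C \<union> D \<in> E)" for C D
  have EK: "E \<subseteq> Kset n (2*k)" using unif by (auto simp: uniform_hypergraph_def Kset_def)
  obtain X where X: "X \<subseteq> K"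
    "real (card {(u,v) \<in> K\<times>K. R u v \<noteq> ((u\<in>X) \<noteq> (v\<in>X))}) \<le> 9 * (real (card K)^2/2 - real (card {(u,v). R u v}))"
  proof (atomize_elim, rule furedi)
    show "finite K" by (simp add: K_def)
    show "\<And>u v. R u v \<Longrightarrow> u \<in> K \<and> v \<in> K" by (simp add: R_def)
    show "\<And>u v. R u v \<Longrightarrow> R v u" by (auto simp: R_def Un_commute Int_commute)
    show "False" if "R a b" "R b c" "R c a" for a b c
    proof -
      have "contains_C3 k {..<n} E" unfolding contains_C3_def
        by (rule exI[of _ a], rule exI[of _ b], rule exI[of _ c]) (use that in \<open>auto simp: R_def K_def Kset_def\<close>)
      thus False using nC3 by simp
    qed
  qed
  have misEq: "{(u,v) \<in> K\<times>K. R u v \<noteq> ((u\<in>X) \<noteq> (v\<in>X))} = Mis n k E X"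
    by (auto simp: Mis_def R_def K_def)
  have cR: "card {(u,v). R u v} = card E * (2*k choose k)"
    using pair_count[OF EK] by (simp add: R_def K_def)
  have KK: "real (card K)^2 \<le> real (n choose (2*k)) * real (2*k choose k) + real n^(2*k-1)"
  proof -
    have "card K ^2 \<le> (n choose (2*k)) * (2*k choose k) + n^(2*k-1)" using KK_bound[OF k1] by (simp add: K_def)
    hence "real (card K ^2) \<le> real ((n choose (2*k)) * (2*k choose k) + n^(2*k-1))" by (simp only: of_nat_le_iff)
    thus ?thesis by simp
  qed
  have Mb: "real (card (Mis n k E X)) \<le> 9 * (real n^(2*k-1)/2 + real (2*k choose k) * (real (n choose (2*k))/2 - real (card E)))"
  proof -
    have "real (card (Mis n k E X)) \<le> 9 * (real (card K)^2/2 - real (card E) * real (2*k choose k))"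
      using X(2) unfolding misEq cR by simp
    also have "\<dots> \<le> 9 * (real n^(2*k-1)/2 + real (2*k choose k) * (real (n choose (2*k))/2 - real (card E)))"
      using KK by (simp add: algebra_simps)
    finally show ?thesis .
  qed
  obtain V1 where V1: "V1 \<subseteq> {..<n}" "card {S. S \<subseteq> {..<n} \<and> card S = 2*k \<and> \<not> correct_set E V1 ({..<n} - V1) S}
           \<le> (k-1) * n^(2*k-1) + (1 + 2*k^3) * card (Mis n k E X)"
    using comb_main[OF k1 nk, of E X] by blast
  have "real (card {S. S \<subseteq> {..<n} \<and> card S = 2*k \<and> \<not> correct_set E V1 ({..<n} - V1) S})
      \<le> real ((k-1) * n^(2*k-1)) + real (1 + 2*k^3) * real (card (Mis n k E X))"
  proof -
    have "real (card {S. S \<subseteq> {..<n} \<and> card S = 2*k \<and> \<not> correct_set E V1 ({..<n} - V1) S})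
      \<le> real ((k-1) * n^(2*k-1) + (1 + 2*k^3) * card (Mis n k E X))" using V1(2) by (simp only: of_nat_le_iff)
    thus ?thesis by (simp only: of_nat_add of_nat_mult)
  qed
  also have "\<dots> \<le> real ((k-1) * n^(2*k-1)) + real (1 + 2*k^3) * (9 * (real n^(2*k-1)/2 + real (2*k choose k) * (real (n choose (2*k))/2 - real (card E))))"
    by (rule add_left_mono, rule mult_left_mono[OF Mb]) simp
  finally have bnd: "real (card {S. S \<subseteq> {..<n} \<and> card S = 2*k \<and> \<not> correct_set E V1 ({..<n} - V1) S})
    \<le> real ((k-1) * n^(2*k-1)) + real (1 + 2*k^3) * (9 * (real n^(2*k-1)/2 + real (2*k choose k) * (real (n choose (2*k))/2 - real (card E))))" .
  show ?thesis by (rule exI[of _ V1], rule conjI[OF V1(1) bnd])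
qed

theorem theorem3p3:
  fixes k :: nat
  assumes "k \<ge> 1"
  shows "\<forall>\<epsilon>::real. \<epsilon> > 0 \<longrightarrow> (\<exists>\<eta>::real. \<eta> > 0 \<and> (\<exists>N::nat. \<forall>n\<ge>N. \<forall>E :: nat set set.
     uniform_hypergraph (2*k) {..<n} E \<and> \<not> contains_C3 k {..<n} E \<and>
     real (card E) > (1/2) * real (n choose (2*k)) - \<eta> * real n ^ (2*k) \<longrightarrow>
     (\<exists>V1 V2. V1 \<union> V2 = {..<n} \<and> V1 \<inter> V2 = {} \<and>
        real (card {S. S \<subseteq> {..<n} \<and> card S = 2*k \<and> \<not> correct_set E V1 V2 S})
          \<le> \<epsilon> * real n ^ (2*k))))"
proof (intro allI impI)
  fix \<epsilon> :: real assume ep: "\<epsilon> > 0"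
  have k1: "k \<ge> 1" by (rule assms)
  define c where "c = real (1 + 2*k^3)"
  define Cb where "Cb = real (2*k choose k)"
  define \<eta> where "\<eta> = \<epsilon> / (18 * c * Cb)"
  define c2 where "c2 = real (k-1) + c * 9 / 2"
  define N where "N = nat \<lceil>2 * c2 / \<epsilon>\<rceil> + k"
  have cpos: "c > 0" unfolding c_def by (rule of_nat_0_less_iff[THEN iffD2]) simp
  have Cbpos: "Cb > 0" by (simp add: Cb_def)
  have etapos: "\<eta> > 0" using ep cpos Cbpos by (simp add: \<eta>_def)
  have key: "\<exists>V1 V2. V1 \<union> V2 = {..<n} \<and> V1 \<inter> V2 = {} \<and>
        real (card {S. S \<subseteq> {..<n} \<and> card S = 2*k \<and> \<not> correct_set E V1 V2 S})
          \<le> \<epsilon> * real n ^ (2*k)"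
    if nN: "n \<ge> N" and unif: "uniform_hypergraph (2*k) {..<n} E" and nC3: "\<not> contains_C3 k {..<n} E"
      and big: "real (card E) > (1/2) * real (n choose (2*k)) - \<eta> * real n ^ (2*k)" for n E
  proof -
    have nk: "k \<le> n" using nN by (simp add: N_def)
    have nbig: "2 * c2 / \<epsilon> \<le> real n"
    proof -
      have a0: "nat \<lceil>2 * c2 / \<epsilon>\<rceil> + k \<le> n" using nN by (simp only: N_def)
      have a: "nat \<lceil>2 * c2 / \<epsilon>\<rceil> \<le> n" by (rule le_trans[OF le_add1 a0])
      have b: "2 * c2 / \<epsilon> \<le> real (nat \<lceil>2 * c2 / \<epsilon>\<rceil>)" by (rule real_nat_ceiling_ge)
      have c: "real (nat \<lceil>2 * c2 / \<epsilon>\<rceil>) \<le> real n" using a by (simp only: of_nat_le_iff)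
      show ?thesis using b c by (rule order_trans)
    qed
    hence nbig2: "c2 \<le> \<epsilon> / 2 * real n" using ep by (simp add: field_simps)
    obtain V1 where V1: "V1 \<subseteq> {..<n}"
      "real (card {S. S \<subseteq> {..<n} \<and> card S = 2*k \<and> \<not> correct_set E V1 ({..<n} - V1) S})
    \<le> real ((k-1) * n^(2*k-1)) + real (1 + 2*k^3) * (9 * (real n^(2*k-1)/2 + real (2*k choose k) * (real (n choose (2*k))/2 - real (card E))))"
      using main_bound[OF k1 nk unif nC3] by blast
    define P where "P = real n ^ (2*k-1)"
    have P0: "P \<ge> 0" by (simp add: P_def)
    have Q: "real n ^ (2*k) = real n * P"
    proof -
      have "2*k = Suc (2*k-1)" using k1 by simp
      hence "real n ^ (2*k) = real n ^ Suc (2*k-1)" by (rule arg_cong)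
      thus ?thesis by (simp add: P_def)
    qed
    have D: "real (n choose (2*k))/2 - real (card E) \<le> \<eta> * (real n * P)" using big Q by simp
    have r1: "real ((k-1) * n^(2*k-1)) = real (k-1) * P" by (simp only: of_nat_mult of_nat_power P_def)
    have t1: "c * (9 * Cb * (real (n choose (2*k))/2 - real (card E))) \<le> c * (9 * Cb * (\<eta> * (real n * P)))"
      using D cpos Cbpos by (intro mult_left_mono) simp_all
    have t2: "c * (9 * Cb * (\<eta> * (real n * P))) = (\<epsilon> * (real n * P)) / 2"
      using cpos Cbpos by (simp add: \<eta>_def field_simps)
    have t3: "c2 * P \<le> (\<epsilon> * (real n * P)) / 2"
    proof -
      have "c2 * P \<le> \<epsilon> / 2 * real n * P" using mult_right_mono[OF nbig2 P0] .
      also have "\<epsilon> / 2 * real n * P = (\<epsilon> * (real n * P)) / 2" by simp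
      finally show ?thesis .
    qed
    have "real ((k-1) * n^(2*k-1)) + real (1 + 2*k^3) * (9 * (real n^(2*k-1)/2 + real (2*k choose k) * (real (n choose (2*k))/2 - real (card E))))
        = c2 * P + c * (9 * Cb * (real (n choose (2*k))/2 - real (card E)))"
      unfolding r1 by (simp add: c_def Cb_def c2_def P_def algebra_simps)
    also have "\<dots> \<le> \<epsilon> * real n ^ (2*k)" unfolding Q using t1 t2 t3 by linarith
    finally have "real (card {S. S \<subseteq> {..<n} \<and> card S = 2*k \<and> \<not> correct_set E V1 ({..<n} - V1) S}) \<le> \<epsilon> * real n ^ (2*k)"
      using V1(2) by linarith
    moreover have "V1 \<union> ({..<n} - V1) = {..<n}" "V1 \<inter> ({..<n} - V1) = {}" using V1(1) by auto
    ultimately show ?thesis by blast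
  qed
  show "\<exists>\<eta>::real. \<eta> > 0 \<and> (\<exists>N::nat. \<forall>n\<ge>N. \<forall>E :: nat set set.
     uniform_hypergraph (2*k) {..<n} E \<and> \<not> contains_C3 k {..<n} E \<and>
     real (card E) > (1/2) * real (n choose (2*k)) - \<eta> * real n ^ (2*k) \<longrightarrow>
     (\<exists>V1 V2. V1 \<union> V2 = {..<n} \<and> V1 \<inter> V2 = {} \<and>
        real (card {S. S \<subseteq> {..<n} \<and> card S = 2*k \<and> \<not> correct_set E V1 V2 S})
          \<le> \<epsilon> * real n ^ (2*k)))"
    using key etapos by blast
qed

end
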